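(* Let $G=(V,E)$ be a graph, let $r\ge1$ be an integer, and let $k=\mathrm{adm}_r(G)$. If $\sigma$ is a total order on $V$ such that $\mathrm{est}_r(u,G_\sigma)\le k$ for all $u\in V$, then for every $u\in V$, \[ \sum_{v\in \mathrm{reach}_r(u,G_\sigma)} (k-1)^{r-d_v} \le k\cdot (k-1)^{r-1}, \] where $d_v=d_v(u,G_\sigma)$.
   Context: For a graph $G$ and a total order $\sigma$ of $V$, a $u$–$v$ path $P$ with $v\ne u$ is $\ell$-qualifying if it has length at most $\ell$, $u<_\sigma v$, and every vertex of $P$ other than $u,v$ precedes $u$ in $\sigma$. $\mathrm{reach}_r(u,G_\sigma)$ is the set of vertices $v$ for which an $r$-qualifying $u$–$v$ path exists, and $d_v(u,G_\sigma)$ is the minimum $i$ such that $v\in\mathrm{reach}_i(u,G_\sigma)$. An $\ell$-qualifying $u$–$v$ path is shortest if no $(\ell-1)$-qualifying $u$–$v$ path exists. The $r$-backconnectivity $\mathrm{bcon}_r(u,G_\sigma)$ is the maximum number of $r$-qualifying paths starting at $u$ that are pairwise vertex-disjoint apart from $u$; the estimated $r$-backconnectivity $\mathrm{est}_r(u,G_\sigma)$ is the maximum number of shortest $r$-qualifying paths starting at $u$ that are pairwise vertex-disjoint apart from $u$. The $r$-admissibility is $\mathrm{adm}_r(G)=\min_\sigma\max_{u}\mathrm{bcon}_r(u,G_\sigma)$ over all total orders $\sigma$ of $V$. *)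

theory Defs
  imports Main
begin

definition simple_graph :: "'a set \<Rightarrow> ('a \<Rightarrow> 'a \<Rightarrow> bool) \<Rightarrow> bool" where
  "simple_graph V E \<longleftrightarrow> finite V \<and> (\<forall>x y. E x y \<longrightarrow> x \<in> V \<and> y \<in> V)
     \<and> (\<forall>x y. E x y \<longrightarrow> E y x) \<and> (\<forall>x. \<not> E x x)"

(* A total order sigma of V, given as a strict linear order relation on V:
   (x,y) \<in> \<sigma> means x <_\<sigma> y. *)
definition total_order_on :: "'a set \<Rightarrow> ('a \<times> 'a) set \<Rightarrow> bool" where
  "total_order_on V \<sigma> \<longleftrightarrow> strict_linear_order_on V \<sigma> \<and> \<sigma> \<subseteq> V \<times> V"

definition is_path :: "'a set \<Rightarrow> ('a \<Rightarrow> 'a \<Rightarrow> bool) \<Rightarrow> 'a list \<Rightarrow> bool" where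
  "is_path V E p \<longleftrightarrow> p \<noteq> [] \<and> distinct p \<and> set p \<subseteq> V
     \<and> (\<forall>i. Suc i < length p \<longrightarrow> E (p ! i) (p ! Suc i))"

definition path_len :: "'a list \<Rightarrow> nat" where
  "path_len p = length p - 1"

definition qualifying ::
  "'a set \<Rightarrow> ('a \<Rightarrow> 'a \<Rightarrow> bool) \<Rightarrow> ('a \<times> 'a) set \<Rightarrow> nat \<Rightarrow> 'a \<Rightarrow> 'a \<Rightarrow> 'a list \<Rightarrow> bool" where
  "qualifying V E \<sigma> l u v p \<longleftrightarrow> is_path V E p \<and> hd p = u \<and> last p = v \<and> v \<noteq> u
     \<and> path_len p \<le> l \<and> (u, v) \<in> \<sigma>
     \<and> (\<forall>w \<in> set p. w \<noteq> u \<and> w \<noteq> v \<longrightarrow> (w, u) \<in> \<sigma>)"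

definition reach :: "'a set \<Rightarrow> ('a \<Rightarrow> 'a \<Rightarrow> bool) \<Rightarrow> ('a \<times> 'a) set \<Rightarrow> nat \<Rightarrow> 'a \<Rightarrow> 'a set" where
  "reach V E \<sigma> r u = {v. \<exists>p. qualifying V E \<sigma> r u v p}"

definition dist_reach :: "'a set \<Rightarrow> ('a \<Rightarrow> 'a \<Rightarrow> bool) \<Rightarrow> ('a \<times> 'a) set \<Rightarrow> 'a \<Rightarrow> 'a \<Rightarrow> nat" where
  "dist_reach V E \<sigma> u v = (LEAST i. v \<in> reach V E \<sigma> i u)"

definition shortest_qualifying ::
  "'a set \<Rightarrow> ('a \<Rightarrow> 'a \<Rightarrow> bool) \<Rightarrow> ('a \<times> 'a) set \<Rightarrow> nat \<Rightarrow> 'a \<Rightarrow> 'a \<Rightarrow> 'a list \<Rightarrow> bool" where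
  "shortest_qualifying V E \<sigma> l u v p \<longleftrightarrow> qualifying V E \<sigma> l u v p
     \<and> \<not> (\<exists>q. qualifying V E \<sigma> (l - 1) u v q)"

definition disjoint_at :: "'a \<Rightarrow> 'a list set \<Rightarrow> bool" where
  "disjoint_at u P \<longleftrightarrow> (\<forall>p \<in> P. \<forall>q \<in> P. p \<noteq> q \<longrightarrow> set p \<inter> set q = {u})"

definition bcon :: "'a set \<Rightarrow> ('a \<Rightarrow> 'a \<Rightarrow> bool) \<Rightarrow> ('a \<times> 'a) set \<Rightarrow> nat \<Rightarrow> 'a \<Rightarrow> nat" where
  "bcon V E \<sigma> r u = Max {card P | P. disjoint_at u P
      \<and> (\<forall>p \<in> P. \<exists>v. qualifying V E \<sigma> r u v p)}"

definition est :: "'a set \<Rightarrow> ('a \<Rightarrow> 'a \<Rightarrow> bool) \<Rightarrow> ('a \<times> 'a) set \<Rightarrow> nat \<Rightarrow> 'a \<Rightarrow> nat" where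
  "est V E \<sigma> r u = Max {card P | P. disjoint_at u P
      \<and> (\<forall>p \<in> P. \<exists>v. qualifying V E \<sigma> r u v p \<and> shortest_qualifying V E \<sigma> (path_len p) u v p)}"

definition adm :: "'a set \<Rightarrow> ('a \<Rightarrow> 'a \<Rightarrow> bool) \<Rightarrow> nat \<Rightarrow> nat" where
  "adm V E r = Min {Max ((\<lambda>u. bcon V E \<sigma> r u) ` V) | \<sigma>. total_order_on V \<sigma>}"

end

theory Submission
  imports Defs
begin


lemma walk_reduce:
  assumes "successively R w" "w \<noteq> []"
  shows "\<exists>p. p \<noteq> [] \<and> distinct p \<and> successively R p \<and> hd p = hd w \<and> last p = last w
           \<and> set p \<subseteq> set w \<and> length p \<le> length w"
  using assms
proof (induction "length w" arbitrary: w rule: less_induct)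
  case less
  show ?case
  proof (cases "distinct w")
    case True then show ?thesis using less by blast
  next
    case False
    then obtain xs ys zs y where w: "w = xs@[y]@ys@[y]@zs" using not_distinct_decomp by blast
    define w' where "w' = xs @ [y] @ zs"
    have s: "successively R w'" using less(2) unfolding w w'_def
      by (auto simp: successively_append_iff successively_Cons)
    have h: "hd w' = hd w" unfolding w w'_def by (cases xs) auto
    have l: "last w' = last w" unfolding w w'_def by (cases zs) auto
    have len: "length w' < length w" unfolding w w'_def by simp
    have st: "set w' \<subseteq> set w" unfolding w w'_def by auto
    obtain p where "p \<noteq> [] \<and> distinct p \<and> successively R p \<and> hd p = hd w' \<and> last p = last w'
           \<and> set p \<subseteq> set w' \<and> length p \<le> length w'"
      using less(1)[OF len s] w'_def by auto
    then show ?thesis using h l len st by (intro exI[of _ p]) auto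
  qed
qed

lemma successively_uses:
  assumes "successively P p" "\<not> successively Q p"
  shows "\<exists>p1 a b p2. p = p1 @ a # b # p2 \<and> P a b \<and> \<not> Q a b"
  using assms
proof (induction p)
  case Nil then show ?case by simp
next
  case (Cons x xs)
  then obtain y ys where xs: "xs = y # ys" by (cases xs) auto
  show ?case
  proof (cases "Q x y")
    case True
    then have "successively P xs" "\<not> successively Q xs" using Cons.prems xs by auto
    then obtain p1 a b p2 where "xs = p1 @ a # b # p2 \<and> P a b \<and> \<not> Q a b" using Cons.IH by blast
    then show ?thesis by (intro exI[of _ "x#p1"]) auto
  next
    case False then show ?thesis using Cons.prems xs by (intro exI[of _ "[]"]) auto
  qed
qed

lemma successively_restrict:
  assumes "successively P xs" "\<And>a b. P a b \<Longrightarrow> a \<in> set (butlast xs) \<Longrightarrow> b \<in> set (tl xs) \<Longrightarrow> Q a b"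
  shows "successively Q xs"
  using assms
proof (induction xs)
  case Nil then show ?case by simp
next
  case (Cons x xs)
  show ?case
  proof (cases xs)
    case Nil then show ?thesis by simp
  next
    case (Cons y ys)
    have "successively Q xs"
    proof (rule Cons.IH)
      show "successively P xs" using Cons.prems \<open>xs = y # ys\<close> by simp
      fix a b assume "P a b" "a \<in> set (butlast xs)" "b \<in> set (tl xs)"
      then show "Q a b" using Cons.prems(2)[of a b] \<open>xs = y # ys\<close>
        by (cases ys) auto
    qed
    moreover have "Q x y" using Cons.prems \<open>xs = y # ys\<close> by auto
    ultimately show ?thesis using \<open>xs = y # ys\<close> by simp
  qed
qed

definition dpath :: "('a \<times> 'a) set \<Rightarrow> 'a list \<Rightarrow> bool" where
  "dpath Ed p \<longleftrightarrow> p \<noteq> [] \<and> distinct p \<and> successively (\<lambda>a b. (a,b) \<in> Ed) p"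

definition abpath :: "('a \<times> 'a) set \<Rightarrow> 'a set \<Rightarrow> 'a set \<Rightarrow> 'a list \<Rightarrow> bool" where
  "abpath Ed A B p \<longleftrightarrow> dpath Ed p \<and> hd p \<in> A \<and> last p \<in> B"

definition separates :: "('a \<times> 'a) set \<Rightarrow> 'a set \<Rightarrow> 'a set \<Rightarrow> 'a set \<Rightarrow> bool" where
  "separates Ed A B S \<longleftrightarrow> (\<forall>p. abpath Ed A B p \<longrightarrow> set p \<inter> S \<noteq> {})"

definition disj_family :: "'a list set \<Rightarrow> bool" where
  "disj_family P \<longleftrightarrow> (\<forall>p\<in>P. \<forall>q\<in>P. p \<noteq> q \<longrightarrow> set p \<inter> set q = {})"

lemma dpath_mono: "dpath Ed p \<Longrightarrow> Ed \<subseteq> Ed' \<Longrightarrow> dpath Ed' p"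
  unfolding dpath_def by (auto elim: successively_mono)

lemma pick_family:
  assumes fin: "finite X" and cardP: "card P = card X" and disj: "disj_family P"
    and ex: "\<forall>p\<in>P. \<exists>p'. Q p' \<and> set p' \<subseteq> set p \<and> ep p' \<in> X \<and> ep p' \<in> set p'"
  shows "\<exists>f. \<forall>a\<in>X. Q (f a) \<and> ep (f a) = a \<and> (\<forall>b\<in>X. a \<noteq> b \<longrightarrow> set (f a) \<inter> set (f b) = {})"
proof -
  define tr where "tr p = (SOME p'. Q p' \<and> set p' \<subseteq> set p \<and> ep p' \<in> X \<and> ep p' \<in> set p')" for p
  have tr: "Q (tr p) \<and> set (tr p) \<subseteq> set p \<and> ep (tr p) \<in> X \<and> ep (tr p) \<in> set (tr p)" if "p \<in> P" for p
    unfolding tr_def by (rule someI_ex) (use ex that in blast)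
  define g where "g p = ep (tr p)" for p
  have inj: "inj_on g P"
  proof (rule inj_onI)
    fix p q assume "p \<in> P" "q \<in> P" "g p = g q"
    note a = this
    show "p = q"
    proof (rule ccontr)
      assume "p \<noteq> q"
      then have "set p \<inter> set q = {}" using disj a unfolding disj_family_def by blast
      moreover have "g p \<in> set p" "g q \<in> set q" using tr[OF a(1)] tr[OF a(2)] unfolding g_def by auto
      ultimately show False using a(3) by auto
    qed
  qed
  have finP: "finite P"
  proof (cases "X = {}")
    case True then show ?thesis using cardP ex by (auto simp: card_eq_0_iff)
  next
    case False then show ?thesis using cardP fin by (metis card.infinite card_0_eq)
  qed
  have "g ` P \<subseteq> X" using tr unfolding g_def by auto
  moreover have "card (g ` P) = card X" using card_image[OF inj] cardP by simp
  ultimately have gP: "g ` P = X" using fin by (simp add: card_subset_eq)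
  define f where "f a = tr (SOME p. p \<in> P \<and> g p = a)" for a
  have f: "(SOME p. p \<in> P \<and> g p = a) \<in> P \<and> g (SOME p. p \<in> P \<and> g p = a) = a" if "a \<in> X" for a
    by (rule someI_ex) (use gP that in blast)
  show ?thesis
  proof (intro exI[of _ f] ballI conjI impI)
    fix a assume a: "a \<in> X"
    show "Q (f a)" using f[OF a] tr unfolding f_def by blast
    show "ep (f a) = a" using f[OF a] unfolding f_def g_def by blast
    fix b assume b: "b \<in> X" "a \<noteq> b"
    let ?pa = "SOME p. p \<in> P \<and> g p = a" and ?pb = "SOME p. p \<in> P \<and> g p = b"
    have "?pa \<noteq> ?pb" using f[OF a] f[OF b(1)] b(2) by metis
    then have "set ?pa \<inter> set ?pb = {}" using disj f[OF a] f[OF b(1)] unfolding disj_family_def by blast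
    then show "set (f a) \<inter> set (f b) = {}" using tr f[OF a] f[OF b(1)] unfolding f_def by blast
  qed
qed


lemma dpath_prefix: "dpath Ed (p1 @ z # p2) \<Longrightarrow> dpath Ed (p1 @ [z])"
  unfolding dpath_def by (auto simp: successively_append_iff successively_Cons)

lemma dpath_suffix: "dpath Ed (p1 @ z # p2) \<Longrightarrow> dpath Ed (z # p2)"
  unfolding dpath_def by (auto simp: successively_append_iff successively_Cons)

lemma dpath_empty: "dpath {} p \<Longrightarrow> \<exists>a. p = [a]"
  unfolding dpath_def by (cases p rule: remdups_adj.cases) auto

lemma set_butlast_last: "xs \<noteq> [] \<Longrightarrow> set xs = insert (last xs) (set (butlast xs))"
  by (metis append_butlast_last_id list.simps(15) rotate1.simps(2) set_rotate1)

lemma set_hd_tl: "xs \<noteq> [] \<Longrightarrow> set xs = insert (hd xs) (set (tl xs))"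
  by (cases xs) auto

theorem menger:
  assumes "finite Ed" "finite A" "finite B"
    "\<And>S. finite S \<Longrightarrow> separates Ed A B S \<Longrightarrow> k \<le> card S"
  shows "\<exists>P. finite P \<and> card P = k \<and> disj_family P \<and> (\<forall>p\<in>P. abpath Ed A B p)"
  using assms
proof (induction "card Ed" arbitrary: Ed A B k rule: less_induct)
  case less
  show ?case
  proof (cases "Ed = {}")
    case True
    have "separates Ed A B (A \<inter> B)"
      unfolding separates_def abpath_def using dpath_empty True by fastforce
    then have "k \<le> card (A \<inter> B)" using less.prems by auto
    then obtain K where K: "K \<subseteq> A \<inter> B" "card K = k"
      using obtain_subset_with_card_n by metis
    let ?P = "(\<lambda>a. [a]) ` K"
    have "card ?P = k" using K by (subst card_image) (auto simp: inj_on_def)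
    moreover have "disj_family ?P" unfolding disj_family_def by auto
    moreover have "\<forall>p\<in>?P. abpath Ed A B p" using K unfolding abpath_def dpath_def by auto
    moreover have "finite ?P" using K less.prems(2) finite_subset by blast
    ultimately show ?thesis by blast
  next
    case False
    then obtain x y where e: "(x,y) \<in> Ed" by auto
    define Ed' where "Ed' = Ed - {(x,y)}"
    have finE': "finite Ed'" using less.prems(1) unfolding Ed'_def by auto
    have lt: "card Ed' < card Ed" using e less.prems(1) unfolding Ed'_def by (metis card_Diff1_less)
    have sub: "Ed' \<subseteq> Ed" unfolding Ed'_def by auto
    show ?thesis
    proof (cases "\<forall>S. finite S \<and> separates Ed' A B S \<longrightarrow> k \<le> card S")
      case True
      then obtain P where P: "finite P" "card P = k" "disj_family P" "\<forall>p\<in>P. abpath Ed' A B p"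
        using less.hyps[OF lt finE' less.prems(2,3)] by blast
      then show ?thesis using dpath_mono[OF _ sub] unfolding abpath_def by blast
    next
      case False
      then obtain S where S: "finite S" "separates Ed' A B S" "card S < k" by auto
      have use_e: "\<exists>p1 p2. p = p1 @ x # y # p2" if p: "abpath Ed A B p" "set p \<inter> S = {}" for p
      proof -
        have "\<not> abpath Ed' A B p" using S(2) p(2) unfolding separates_def by blast
        then have "\<not> successively (\<lambda>a b. (a,b) \<in> Ed') p" using p(1) unfolding abpath_def dpath_def by auto
        moreover have "successively (\<lambda>a b. (a,b) \<in> Ed) p" using p(1) unfolding abpath_def dpath_def by auto
        ultimately obtain p1 a b p2 where "p = p1 @ a # b # p2" "(a,b) \<in> Ed" "(a,b) \<notin> Ed'"
          using successively_uses by blast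
        then show ?thesis unfolding Ed'_def by auto
      qed
      have sepX1: "separates Ed A B (insert x S)"
        unfolding separates_def
      proof (intro allI impI)
        fix p assume p: "abpath Ed A B p"
        show "set p \<inter> insert x S \<noteq> {}"
        proof (cases "set p \<inter> S = {}")
          case True then obtain p1 p2 where "p = p1 @ x # y # p2" using use_e p by blast
          then show ?thesis by auto
        qed auto
      qed
      have sepX2: "separates Ed A B (insert y S)"
        unfolding separates_def
      proof (intro allI impI)
        fix p assume p: "abpath Ed A B p"
        show "set p \<inter> insert y S \<noteq> {}"
        proof (cases "set p \<inter> S = {}")
          case True then obtain p1 p2 where "p = p1 @ x # y # p2" using use_e p by blast
          then show ?thesis by auto
        qed auto
      qed
      have k1: "k \<le> card (insert x S)" using less.prems(4) sepX1 S(1) by auto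
      have k2: "k \<le> card (insert y S)" using less.prems(4) sepX2 S(1) by auto
      have xS: "x \<notin> S" using k1 S by (auto simp: insert_absorb)
      have yS: "y \<notin> S" using k2 S by (auto simp: insert_absorb)
      have cX1: "card (insert x S) = k" using k1 S xS by auto
      have cX2: "card (insert y S) = k" using k2 S yS by auto
      define X1 where "X1 = insert x S"
      define X2 where "X2 = insert y S"
      have finX1: "finite X1" "finite X2" using S(1) unfolding X1_def X2_def by auto
      have sep1: "k \<le> card T" if T: "finite T" "separates Ed' A X1 T" for T
      proof -
        have "separates Ed A B T"
          unfolding separates_def
        proof (intro allI impI)
          fix p assume p: "abpath Ed A B p"
          then have "set p \<inter> X1 \<noteq> {}" using sepX1 unfolding separates_def X1_def by blast
          then obtain p1 z p2 where sp: "p = p1 @ z # p2" "z \<in> X1" "\<forall>w\<in>set p1. w \<notin> X1"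
            using split_list_first_prop[of p "\<lambda>w. w \<in> X1"] by blast
          have dp: "dpath Ed (p1 @ [z])" using dpath_prefix p sp(1) unfolding abpath_def by metis
          have "successively (\<lambda>a b. (a,b) \<in> Ed') (p1 @ [z])"
          proof (rule ccontr)
            assume "\<not> ?thesis"
            then obtain q1 a b q2 where q: "p1 @ [z] = q1 @ a # b # q2" "(a,b) \<in> Ed" "(a,b) \<notin> Ed'"
              using successively_uses[of _ "p1 @ [z]"] dp unfolding dpath_def by blast
            then have "a = x" unfolding Ed'_def by auto
            have "a \<in> set (butlast (p1 @ [z]))" unfolding q(1) by (simp add: butlast_append)
            then have "a \<in> set p1" by simp
            then show False using sp(3) \<open>a = x\<close> unfolding X1_def by auto
          qed
          then have "abpath Ed' A X1 (p1 @ [z])" using dp p sp unfolding abpath_def dpath_def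
            by (cases p1) auto
          then have "set (p1 @ [z]) \<inter> T \<noteq> {}" using T(2) unfolding separates_def by blast
          then show "set p \<inter> T \<noteq> {}" using sp(1) by auto
        qed
        then show ?thesis using less.prems(4) T(1) by blast
      qed
      have sep2: "k \<le> card T" if T: "finite T" "separates Ed' X2 B T" for T
      proof -
        have "separates Ed A B T"
          unfolding separates_def
        proof (intro allI impI)
          fix p assume p: "abpath Ed A B p"
          then have "set p \<inter> X2 \<noteq> {}" using sepX2 unfolding separates_def X2_def by blast
          then obtain p1 z p2 where sp: "p = p1 @ z # p2" "z \<in> X2" "\<forall>w\<in>set p2. w \<notin> X2"
            using split_list_last_prop[of p "\<lambda>w. w \<in> X2"] by blast
          have dp: "dpath Ed (z # p2)" using dpath_suffix p sp(1) unfolding abpath_def by metis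
          have "successively (\<lambda>a b. (a,b) \<in> Ed') (z # p2)"
          proof (rule ccontr)
            assume "\<not> ?thesis"
            then obtain q1 a b q2 where q: "z # p2 = q1 @ a # b # q2" "(a,b) \<in> Ed" "(a,b) \<notin> Ed'"
              using successively_uses[of _ "z # p2"] dp unfolding dpath_def by blast
            then have "b = y" unfolding Ed'_def by auto
            have "b \<in> set (tl (z # p2))" unfolding q(1) by (cases q1) auto
            then have "b \<in> set p2" by simp
            then show False using sp(3) \<open>b = y\<close> unfolding X2_def by auto
          qed
          then have "abpath Ed' X2 B (z # p2)" using dp p sp unfolding abpath_def dpath_def
            by (cases p2) auto
          then have "set (z # p2) \<inter> T \<noteq> {}" using T(2) unfolding separates_def by blast
          then show "set p \<inter> T \<noteq> {}" using sp(1) by auto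
        qed
        then show ?thesis using less.prems(4) T(1) by blast
      qed
      obtain P1 where P1: "finite P1" "card P1 = k" "disj_family P1" "\<forall>p\<in>P1. abpath Ed' A X1 p"
        using less.hyps[OF lt finE' less.prems(2) finX1(1)] sep1 by blast
      obtain P2 where P2: "finite P2" "card P2 = k" "disj_family P2" "\<forall>p\<in>P2. abpath Ed' X2 B p"
        using less.hyps[OF lt finE' finX1(2) less.prems(3)] sep2 by blast
      have ex1: "\<exists>p'. (abpath Ed' A X1 p' \<and> set (butlast p') \<inter> X1 = {}) \<and> set p' \<subseteq> set p
                   \<and> last p' \<in> X1 \<and> last p' \<in> set p'" if "p \<in> P1" for p
      proof -
        have p: "abpath Ed' A X1 p" using P1 that by blast
        then have "last p \<in> set p" "last p \<in> X1" unfolding abpath_def dpath_def by auto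
        then obtain p1 z p2 where sp: "p = p1 @ z # p2" "z \<in> X1" "\<forall>w\<in>set p1. w \<notin> X1"
          using split_list_first_prop[of p "\<lambda>w. w \<in> X1"] by blast
        have "dpath Ed' (p1 @ [z])" using dpath_prefix p sp(1) unfolding abpath_def by metis
        then have "abpath Ed' A X1 (p1 @ [z])" using p sp unfolding abpath_def
          by (cases p1) auto
        moreover have "set (butlast (p1 @ [z])) \<inter> X1 = {}" using sp(3) by auto
        ultimately show ?thesis using sp by (intro exI[of _ "p1 @ [z]"]) auto
      qed
      obtain f where f: "\<forall>a\<in>X1. (abpath Ed' A X1 (f a) \<and> set (butlast (f a)) \<inter> X1 = {})
          \<and> last (f a) = a \<and> (\<forall>b\<in>X1. a \<noteq> b \<longrightarrow> set (f a) \<inter> set (f b) = {})"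
        using pick_family[OF finX1(1) _ P1(3), of "\<lambda>p'. abpath Ed' A X1 p' \<and> set (butlast p') \<inter> X1 = {}" last]
          P1(2) cX1 ex1 unfolding X1_def by auto
      have ex2: "\<exists>p'. (abpath Ed' X2 B p' \<and> set (tl p') \<inter> X2 = {}) \<and> set p' \<subseteq> set p
                   \<and> hd p' \<in> X2 \<and> hd p' \<in> set p'" if "p \<in> P2" for p
      proof -
        have p: "abpath Ed' X2 B p" using P2 that by blast
        then have "hd p \<in> set p" "hd p \<in> X2" unfolding abpath_def dpath_def by auto
        then obtain p1 z p2 where sp: "p = p1 @ z # p2" "z \<in> X2" "\<forall>w\<in>set p2. w \<notin> X2"
          using split_list_last_prop[of p "\<lambda>w. w \<in> X2"] by blast
        have "dpath Ed' (z # p2)" using dpath_suffix p sp(1) unfolding abpath_def by metis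
        then have "abpath Ed' X2 B (z # p2)" using p sp unfolding abpath_def
          by (cases p2) auto
        moreover have "set (tl (z # p2)) \<inter> X2 = {}" using sp(3) by auto
        ultimately show ?thesis using sp by (intro exI[of _ "z # p2"]) auto
      qed
      obtain h where h: "\<forall>a\<in>X2. (abpath Ed' X2 B (h a) \<and> set (tl (h a)) \<inter> X2 = {})
          \<and> hd (h a) = a \<and> (\<forall>b\<in>X2. a \<noteq> b \<longrightarrow> set (h a) \<inter> set (h b) = {})"
        using pick_family[OF finX1(2) _ P2(3), of "\<lambda>p'. abpath Ed' X2 B p' \<and> set (tl p') \<inter> X2 = {}" hd]
          P2(2) cX2 ex2 unfolding X2_def by auto
      have key: "z \<in> S \<and> z = a \<and> z = b"
        if ab: "a \<in> X1" "b \<in> X2" "z \<in> set (f a)" "z \<in> set (h b)" for a b z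
      proof -
        have fa: "abpath Ed' A X1 (f a)" "set (butlast (f a)) \<inter> X1 = {}" "last (f a) = a"
          using f ab(1) by auto
        have hb: "abpath Ed' X2 B (h b)" "set (tl (h b)) \<inter> X2 = {}" "hd (h b) = b"
          using h ab(2) by auto
        have zS: "z \<in> S"
        proof (rule ccontr)
          assume zS: "z \<notin> S"
          obtain p1 p2 where fs: "f a = p1 @ z # p2" using ab(3) split_list by metis
          obtain q1 q2 where hs: "h b = q1 @ z # q2" using ab(4) split_list by metis
          define w where "w = (p1 @ [z]) @ q2"
          have s1: "successively (\<lambda>a b. (a,b) \<in> Ed') (p1 @ [z])"
            using fa(1) fs unfolding abpath_def dpath_def by (auto simp: successively_append_iff)
          have s2: "successively (\<lambda>a b. (a,b) \<in> Ed') (z # q2)"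
            using hb(1) hs unfolding abpath_def dpath_def by (auto simp: successively_append_iff)
          have sw: "successively (\<lambda>a b. (a,b) \<in> Ed') w" unfolding w_def
            using s1 s2 by (auto simp: successively_append_iff successively_Cons)
          have hdw: "hd w = hd (f a)" unfolding w_def fs by (cases p1) auto
          have lw: "last w = last (h b)" unfolding w_def hs by (cases q2) auto
          obtain p where p: "p \<noteq> []" "distinct p" "successively (\<lambda>a b. (a,b) \<in> Ed') p"
              "hd p = hd w" "last p = last w" "set p \<subseteq> set w"
            using walk_reduce[OF sw] unfolding w_def by auto
          have "abpath Ed' A B p" using p hdw lw fa(1) hb(1) unfolding abpath_def dpath_def by auto
          moreover have "set p \<inter> S = {}"
          proof -
            have "set p1 \<subseteq> set (butlast (f a))" unfolding fs by (simp add: butlast_append)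
            moreover have "set q2 \<subseteq> set (tl (h b))" unfolding hs by (cases q1) auto
            ultimately have "set w \<inter> S = {}" using fa(2) hb(2) zS unfolding w_def X1_def X2_def by auto
            then show ?thesis using p(6) by auto
          qed
          ultimately show False using S(2) unfolding separates_def by blast
        qed
        have "f a \<noteq> []" "h b \<noteq> []" using fa(1) hb(1) unfolding abpath_def dpath_def by auto
        have "z = a" using set_butlast_last[OF \<open>f a \<noteq> []\<close>] fa(2,3) ab(3) zS unfolding X1_def by auto
        moreover have "z = b" using set_hd_tl[OF \<open>h b \<noteq> []\<close>] hb(2,3) ab(4) zS unfolding X2_def by auto
        ultimately show ?thesis using zS by auto
      qed
      define a' where "a' a = (if a = x then y else a)" for a
      define G where "G a = (if a = x then f x @ h y else f a @ tl (h a))" for a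
      have a'X2: "a' a \<in> X2" if "a \<in> X1" for a using that unfolding a'_def X1_def X2_def by auto
      have Gset: "set (G a) \<subseteq> set (f a) \<union> set (h (a' a))" for a
        unfolding G_def a'_def by (cases "h a") auto
      have Gpath: "abpath Ed A B (G a)" if a: "a \<in> X1" for a
      proof (cases "a = x")
        case True
        have fx: "abpath Ed' A X1 (f x)" "last (f x) = x" using f unfolding X1_def by auto
        have hy: "abpath Ed' X2 B (h y)" "hd (h y) = y" using h unfolding X2_def by auto
        have dis: "set (f x) \<inter> set (h y) = {}"
          using key[of x y] xS unfolding X1_def X2_def by auto
        have "dpath Ed (f x @ h y)"
          using fx hy dis e sub unfolding abpath_def dpath_def
          by (auto simp: successively_append_iff elim!: successively_mono)
        then show ?thesis using fx hy True unfolding G_def abpath_def dpath_def by auto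
      next
        case False
        then have aS: "a \<in> S" using a unfolding X1_def by auto
        have fa: "abpath Ed' A X1 (f a)" "last (f a) = a" using f a by auto
        have ha: "abpath Ed' X2 B (h a)" "hd (h a) = a" using h aS unfolding X2_def by auto
        then obtain t where t: "h a = a # t" unfolding abpath_def dpath_def by (cases "h a") auto
        have dis: "set (f a) \<inter> set t = {}"
        proof -
          have "z = a" if "z \<in> set (f a)" "z \<in> set t" for z
            using key[of a a z] aS that t unfolding X1_def X2_def by auto
          moreover have "a \<notin> set t" using ha t unfolding abpath_def dpath_def by auto
          ultimately show ?thesis by blast
        qed
        have "dpath Ed (f a @ t)"
          using fa ha dis sub t unfolding abpath_def dpath_def
          by (auto simp: successively_append_iff successively_Cons elim!: successively_mono)
        moreover have "last (f a @ t) \<in> B"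
          using fa ha t unfolding abpath_def dpath_def by (cases t) auto
        ultimately show ?thesis using fa t False unfolding G_def abpath_def dpath_def by auto
      qed
      have Gdisj: "set (G a) \<inter> set (G b) = {}" if ab: "a \<in> X1" "b \<in> X1" "a \<noteq> b" for a b
      proof -
        have "a' a \<noteq> a' b" using ab yS unfolding a'_def X1_def by auto
        then have hh: "set (h (a' a)) \<inter> set (h (a' b)) = {}" using h a'X2 ab by blast
        have ff: "set (f a) \<inter> set (f b) = {}" using f ab by blast
        have fh: "set (f c) \<inter> set (h (a' d)) = {}" if "c \<in> X1" "d \<in> X1" "c \<noteq> d" for c d
        proof -
          have "False" if z: "z \<in> set (f c)" "z \<in> set (h (a' d))" for z
          proof -
            have "z \<in> S" "z = c" "z = a' d" using key[OF \<open>c \<in> X1\<close> a'X2[OF \<open>d \<in> X1\<close>] z] by auto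
            then show False using \<open>c \<noteq> d\<close> yS unfolding a'_def by (auto split: if_splits)
          qed
          then show ?thesis by blast
        qed
        show ?thesis using Gset[of a] Gset[of b] hh ff fh[of a b] fh[of b a] ab by blast
      qed
      have Gne: "G a \<noteq> []" if "a \<in> X1" for a using Gpath[OF that] unfolding abpath_def dpath_def by auto
      have injG: "inj_on G X1"
      proof (rule inj_onI)
        fix a b assume "a \<in> X1" "b \<in> X1" "G a = G b"
        then show "a = b" using Gdisj[of a b] Gne[of a] by (metis inf.idem set_empty)
      qed
      let ?P = "G ` X1"
      have "card ?P = k" using card_image[OF injG] cX1 unfolding X1_def by simp
      moreover have "disj_family ?P" unfolding disj_family_def using Gdisj by blast
      moreover have "\<forall>p\<in>?P. abpath Ed A B p" using Gpath by blast
      moreover have "finite ?P" using finX1(1) by blast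
      ultimately show ?thesis by blast
    qed
  qed
qed



locale adm_ctx =
  fixes V :: "'a set" and E :: "'a \<Rightarrow> 'a \<Rightarrow> bool" and \<sigma> :: "('a \<times> 'a) set"
    and r k :: nat and u :: 'a
  assumes sg: "simple_graph V E" and tot: "total_order_on V \<sigma>"
    and estk: "\<forall>w\<in>V. est V E \<sigma> r w \<le> k" and uV: "u \<in> V"
begin

lemma finV: "finite V" using sg unfolding simple_graph_def by auto
lemma EV: "E a b \<Longrightarrow> a \<in> V \<and> b \<in> V" using sg unfolding simple_graph_def by auto
lemma Esym: "E a b \<Longrightarrow> E b a" using sg unfolding simple_graph_def by auto
lemma lt_trans: "(a,b) \<in> \<sigma> \<Longrightarrow> (b,c) \<in> \<sigma> \<Longrightarrow> (a,c) \<in> \<sigma>"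
  using tot unfolding total_order_on_def strict_linear_order_on_def trans_def by blast
lemma lt_irrefl: "(a,a) \<notin> \<sigma>"
  using tot unfolding total_order_on_def strict_linear_order_on_def irrefl_def by blast
lemma lt_total: "a \<in> V \<Longrightarrow> b \<in> V \<Longrightarrow> a \<noteq> b \<Longrightarrow> (a,b) \<in> \<sigma> \<or> (b,a) \<in> \<sigma>"
  using tot unfolding total_order_on_def strict_linear_order_on_def total_on_def by blast
lemma lt_V: "(a,b) \<in> \<sigma> \<Longrightarrow> a \<in> V \<and> b \<in> V"
  using tot unfolding total_order_on_def by blast
lemma lt_asym: "(a,b) \<in> \<sigma> \<Longrightarrow> (b,a) \<notin> \<sigma>"
  using lt_trans lt_irrefl by blast

lemma is_path_iff: "is_path V E p \<longleftrightarrow> p \<noteq> [] \<and> distinct p \<and> set p \<subseteq> V \<and> successively E p"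
  unfolding is_path_def successively_conv_nth by auto

definition lu :: "'a \<Rightarrow> bool" where "lu w \<longleftrightarrow> w = u \<or> (w,u) \<in> \<sigma>"

definition upath :: "'a list \<Rightarrow> bool" where
  "upath p \<longleftrightarrow> is_path V E p \<and> hd p = u \<and> (\<forall>w\<in>set (butlast p). lu w)"

definition Rch :: "'a set" where "Rch = {y. \<exists>p. upath p \<and> last p = y}"

definition dep :: "'a \<Rightarrow> nat" where
  "dep y = (LEAST n. \<exists>p. upath p \<and> last p = y \<and> length p = Suc n)"

definition Dedge :: "'a \<Rightarrow> 'a \<Rightarrow> bool" where
  "Dedge a b \<longleftrightarrow> E a b \<and> a \<in> Rch \<and> lu a \<and> b \<in> Rch \<and> dep b = Suc (dep a)"

definition T :: "'a \<Rightarrow> 'a set" where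
  "T y = {v \<in> reach V E \<sigma> r u. \<exists>w. w \<noteq> [] \<and> successively Dedge w \<and> hd w = y \<and> last w = v}"

definition W :: "'a \<Rightarrow> nat" where
  "W y = (\<Sum>v\<in>T y. (k - 1) ^ (r - dep v))"

lemma lu_trans: "lu x \<Longrightarrow> (z,x) \<in> \<sigma> \<Longrightarrow> (z,u) \<in> \<sigma>"
  unfolding lu_def using lt_trans by blast

lemma dep_ex: "y \<in> Rch \<Longrightarrow> \<exists>p. upath p \<and> last p = y \<and> length p = Suc (dep y)"
proof -
  assume "y \<in> Rch"
  then obtain p where p: "upath p" "last p = y" unfolding Rch_def by auto
  then have "p \<noteq> []" unfolding upath_def is_path_def by auto
  then have "\<exists>n p. upath p \<and> last p = y \<and> length p = Suc n" using p by (intro exI[of _ "length p - 1"] exI[of _ p]) auto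
  then show ?thesis unfolding dep_def by (rule LeastI_ex)
qed

lemma dep_le: "upath p \<Longrightarrow> dep (last p) + 1 \<le> length p"
proof -
  assume p: "upath p"
  then have "p \<noteq> []" unfolding upath_def is_path_def by auto
  then have "dep (last p) \<le> length p - 1" unfolding dep_def using p by (intro Least_le) auto
  then show ?thesis using \<open>p \<noteq> []\<close> by (cases p) auto
qed

lemma upath_Rch: "upath p \<Longrightarrow> last p \<in> Rch" unfolding Rch_def by auto

lemma walk_up:
  assumes "successively E w" "w \<noteq> []" "set w \<subseteq> V" "hd w = u" "\<forall>z\<in>set w. z \<noteq> last w \<longrightarrow> lu z"
  shows "last w \<in> Rch \<and> dep (last w) + 1 \<le> length w"
proof -
  obtain p where p: "p \<noteq> []" "distinct p" "successively E p" "hd p = hd w" "last p = last w"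
      "set p \<subseteq> set w" "length p \<le> length w"
    using walk_reduce[OF assms(1,2)] by blast
  have "upath p" unfolding upath_def is_path_iff
  proof (intro conjI ballI)
    fix z assume z: "z \<in> set (butlast p)"
    then have "z \<noteq> last p" using p(1,2) by (metis append_butlast_last_id distinct_append not_distinct_conv_prefix)
    moreover have "z \<in> set w" using z p(6) in_set_butlastD by fast
    ultimately show "lu z" using assms(5) p(5) by auto
  qed (use p assms in auto)
  then show ?thesis using dep_le[of p] upath_Rch[of p] p by auto
qed

lemma dep_u: "dep u = 0"
proof -
  have "upath [u]" unfolding upath_def is_path_iff using uV by auto
  then show ?thesis using dep_le[of "[u]"] by auto
qed

lemma u_Rch: "u \<in> Rch"
proof -
  have "upath [u]" unfolding upath_def is_path_iff using uV by auto
  then show ?thesis using upath_Rch by fastforce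
qed


lemma sp_nth:
  assumes p: "upath p" "length p = Suc (dep (last p))" and i: "i < length p"
  shows "p ! i \<in> Rch \<and> dep (p ! i) = i"
proof -
  have pne: "p \<noteq> []" using p unfolding upath_def is_path_def by auto
  have pp: "distinct p" "set p \<subseteq> V" "successively E p" "hd p = u" "\<forall>w\<in>set (butlast p). lu w"
    using p(1) unfolding upath_def is_path_iff by auto
  have lu_i: "lu (p ! j)" if "j < length p - 1" for j
    using pp(5) that by (metis length_butlast nth_butlast nth_mem)
  let ?t = "take (Suc i) p"
  have t: "upath ?t"
    unfolding upath_def is_path_iff
  proof (intro conjI ballI)
    show "?t \<noteq> []" using pne by simp
    show "distinct ?t" using pp by simp
    show "set ?t \<subseteq> V" using pp set_take_subset by fast
    show "successively E ?t" using pp(3) by (metis append_take_drop_id successively_append_iff)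
    show "hd ?t = u" using pp pne by simp
    fix w assume "w \<in> set (butlast ?t)"
    then obtain j where "j < i" "w = p ! j" using i
      by (auto simp: in_set_conv_nth butlast_take min_def split: if_splits)
    then show "lu w" using lu_i i by auto
  qed
  have lt: "last ?t = p ! i" using i by (simp add: take_Suc_conv_app_nth)
  have le: "dep (p ! i) \<le> i" using dep_le[OF t] lt i by simp
  have Ri: "p ! i \<in> Rch" using upath_Rch[OF t] lt by simp
  have "\<not> dep (p ! i) < i"
  proof
    assume lt2: "dep (p ! i) < i"
    obtain q where q: "upath q" "last q = p ! i" "length q = Suc (dep (p ! i))" using dep_ex[OF Ri] by blast
    have qq: "q \<noteq> []" "distinct q" "set q \<subseteq> V" "successively E q" "hd q = u" "\<forall>w\<in>set (butlast q). lu w"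
      using q(1) unfolding upath_def is_path_iff by auto
    let ?d = "drop (Suc i) p"
    define w where "w = q @ ?d"
    have sw: "successively E w"
    proof -
      have "successively E ?d" using pp(3) by (metis append_take_drop_id successively_append_iff)
      moreover have "?d \<noteq> [] \<Longrightarrow> E (last q) (hd ?d)"
        using pp(3) q(2) i by (simp add: hd_drop_conv_nth successively_nth)
      ultimately show ?thesis unfolding w_def using qq(4) by (auto simp: successively_append_iff)
    qed
    have lw: "last w = last p"
    proof (cases "Suc i < length p")
      case True then show ?thesis unfolding w_def by (simp add: last_drop)
    next
      case False
      then have "i = length p - 1" using i by simp
      then show ?thesis unfolding w_def using q(2) pne by (simp add: last_conv_nth)
    qed
    have cond: "\<forall>z\<in>set w. z \<noteq> last w \<longrightarrow> lu z"
    proof (intro ballI impI)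
      fix z assume z: "z \<in> set w" "z \<noteq> last w"
      show "lu z"
      proof (cases "z \<in> set q")
        case True
        show ?thesis
        proof (cases "z = last q")
          case True
          have "i \<noteq> length p - 1" using z(2) lw True q(2) pne by (metis last_conv_nth)
          then show ?thesis using True q(2) lu_i i by auto
        next
          case False
          then have "z \<in> set (butlast q)" using \<open>z \<in> set q\<close> set_butlast_last[OF qq(1)] by auto
          then show ?thesis using qq(6) by auto
        qed
      next
        case False
        then have "z \<in> set ?d" using z(1) unfolding w_def by auto
        then have "z \<in> set p" by (meson in_set_dropD)
        then have "z \<in> set (butlast p)" using z(2) lw set_butlast_last[OF pne] by auto
        then show ?thesis using pp(5) by auto
      qed
    qed
    have wV: "set w \<subseteq> V" using qq(3) pp(2) unfolding w_def by (auto dest: in_set_dropD)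
    have wne: "w \<noteq> []" "hd w = u" using qq unfolding w_def by auto
    have "dep (last w) + 1 \<le> length w"
      using walk_up[OF sw wne(1) wV wne(2) cond] by simp
    then have "dep (last p) + 1 \<le> Suc (dep (p ! i)) + (length p - Suc i)" using lw q(3) unfolding w_def by simp
    then show False using p(2) lt2 i by linarith
  qed
  then show ?thesis using le Ri by simp
qed

lemma Dedge_E: "Dedge a b \<Longrightarrow> E a b" unfolding Dedge_def by auto

lemma dwalk_dep:
  assumes "successively Dedge w" "w \<noteq> []"
  shows "\<forall>i<length w. dep (w ! i) = dep (hd w) + i"
  using assms
proof (induction w)
  case (Cons a w)
  show ?case
  proof (cases w)
    case Nil then show ?thesis by simp
  next
    case (Cons b w')
    then have "Dedge a b" "successively Dedge w" using Cons.prems by auto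
    then have IH: "\<forall>i<length w. dep (w ! i) = dep b + i" using Cons.IH \<open>w = b # w'\<close> by auto
    have "dep b = Suc (dep a)" using \<open>Dedge a b\<close> unfolding Dedge_def by auto
    show ?thesis
    proof (intro allI impI)
      fix i assume "i < length (a # w)"
      then show "dep ((a # w) ! i) = dep (hd (a # w)) + i"
        using IH \<open>dep b = Suc (dep a)\<close> by (cases i) auto
    qed
  qed
qed simp

lemma dwalk_distinct:
  assumes "successively Dedge w" "w \<noteq> []"
  shows "distinct w"
proof -
  have d: "\<forall>i<length w. dep (w ! i) = dep (hd w) + i" using dwalk_dep[OF assms] .
  show ?thesis unfolding distinct_conv_nth
  proof (intro allI impI)
    fix i j assume "i < length w" "j < length w" "i \<noteq> j"
    then have "dep (w ! i) \<noteq> dep (w ! j)" using d by auto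
    then show "w ! i \<noteq> w ! j" by auto
  qed
qed

lemma dwalk_set_dep:
  assumes "successively Dedge w" "w \<noteq> []" "z \<in> set w"
  shows "dep (hd w) \<le> dep z \<and> dep z \<le> dep (last w) \<and> (z \<noteq> hd w \<longrightarrow> dep (hd w) < dep z)"
proof -
  have d: "\<forall>i<length w. dep (w ! i) = dep (hd w) + i" using dwalk_dep[OF assms(1,2)] .
  obtain i where i: "i < length w" "z = w ! i" using assms(3) by (auto simp: in_set_conv_nth)
  have "dep (last w) = dep (hd w) + (length w - 1)" using d assms(2) by (simp add: last_conv_nth)
  moreover have "z \<noteq> hd w \<Longrightarrow> i \<noteq> 0" using i assms(2) hd_conv_nth by metis
  ultimately show ?thesis using d i by auto
qed

lemma dwalk_last_dep:
  assumes "successively Dedge w" "w \<noteq> []"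
  shows "dep (last w) = dep (hd w) + (length w - 1)"
  using dwalk_dep[OF assms] assms(2) by (simp add: last_conv_nth)

lemma succ_tl_head: "successively R p \<Longrightarrow> z \<in> set (tl p) \<Longrightarrow> \<exists>a. R a z"
proof (induction p)
  case (Cons x p)
  then show ?case by (cases p) auto
qed simp

lemma succ_butlast_tail: "successively R p \<Longrightarrow> z \<in> set (butlast p) \<Longrightarrow> \<exists>b. R z b"
proof (induction p)
  case (Cons x p)
  then show ?case by (cases p) auto
qed simp

lemma dwalk_Rch:
  assumes "successively Dedge w" "w \<noteq> []" "hd w \<in> Rch" "z \<in> set w"
  shows "z \<in> Rch"
proof (cases "z = hd w")
  case False
  then have "z \<in> set (tl w)" using assms(2,4) by (cases w) auto
  then obtain a where "Dedge a z" using succ_tl_head[OF assms(1)] by blast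
  then show ?thesis unfolding Dedge_def by simp
qed (use assms in auto)

lemma sp_dwalk:
  assumes p: "upath p" "length p = Suc (dep (last p))"
  shows "successively Dedge p"
  unfolding successively_conv_nth
proof (intro allI impI)
  fix i assume i: "Suc i < length p"
  have pp: "distinct p" "set p \<subseteq> V" "successively E p" "\<forall>w\<in>set (butlast p). lu w"
    using p(1) unfolding upath_def is_path_iff by auto
  have ib: "i < length (butlast p)" using i by simp
  then have "butlast p ! i \<in> set (butlast p)" by (rule nth_mem)
  then have "lu (p ! i)" using nth_butlast[OF ib] pp(4) by simp
  moreover have "p ! i \<in> Rch \<and> dep (p ! i) = i" using sp_nth[OF p, of i] i by simp
  moreover have "p ! Suc i \<in> Rch \<and> dep (p ! Suc i) = Suc i" using sp_nth[OF p, of "Suc i"] i by simp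
  moreover have "E (p ! i) (p ! Suc i)" using successively_nth[OF pp(3) i] .
  ultimately show "Dedge (p ! i) (p ! Suc i)" unfolding Dedge_def by simp
qed

lemma qual_iff:
  assumes "(u,v) \<in> \<sigma>"
  shows "qualifying V E \<sigma> l u v p \<longleftrightarrow> upath p \<and> last p = v \<and> path_len p \<le> l"
proof
  assume q: "qualifying V E \<sigma> l u v p"
  then have pne: "p \<noteq> []" "distinct p" unfolding qualifying_def is_path_def by auto
  have "lu w" if "w \<in> set (butlast p)" for w
  proof -
    have "w \<noteq> last p" using that pne by (metis append_butlast_last_id distinct_append not_distinct_conv_prefix)
    then show ?thesis using q that unfolding qualifying_def lu_def by (auto dest: in_set_butlastD)
  qed
  then show "upath p \<and> last p = v \<and> path_len p \<le> l" using q unfolding qualifying_def upath_def by auto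
next
  assume q: "upath p \<and> last p = v \<and> path_len p \<le> l"
  then have pne: "p \<noteq> []" unfolding upath_def is_path_def by auto
  have "v \<noteq> u" using assms lt_irrefl by auto
  moreover have "(w,u) \<in> \<sigma>" if "w \<in> set p" "w \<noteq> u" "w \<noteq> v" for w
    using q that set_butlast_last[OF pne] unfolding upath_def lu_def by auto
  ultimately show "qualifying V E \<sigma> l u v p" using q assms unfolding qualifying_def upath_def by auto
qed

lemma reach_iff: "v \<in> reach V E \<sigma> l u \<longleftrightarrow> v \<in> Rch \<and> (u,v) \<in> \<sigma> \<and> dep v \<le> l"
proof
  assume "v \<in> reach V E \<sigma> l u"
  then obtain p where q: "qualifying V E \<sigma> l u v p" unfolding reach_def by auto
  then have uv: "(u,v) \<in> \<sigma>" unfolding qualifying_def by auto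
  then have "upath p" "last p = v" "path_len p \<le> l" using qual_iff q by auto
  then show "v \<in> Rch \<and> (u,v) \<in> \<sigma> \<and> dep v \<le> l" using dep_le[of p] upath_Rch[of p] uv
    unfolding path_len_def by auto
next
  assume v: "v \<in> Rch \<and> (u,v) \<in> \<sigma> \<and> dep v \<le> l"
  then obtain p where "upath p" "last p = v" "length p = Suc (dep v)" using dep_ex by blast
  then have "qualifying V E \<sigma> l u v p" using qual_iff v unfolding path_len_def by auto
  then show "v \<in> reach V E \<sigma> l u" unfolding reach_def by auto
qed

lemma dist_reach_dep:
  assumes "v \<in> Rch" "(u,v) \<in> \<sigma>"
  shows "dist_reach V E \<sigma> u v = dep v"
  unfolding dist_reach_def
proof (rule Least_equality)
  show "v \<in> reach V E \<sigma> (dep v) u" using reach_iff assms by auto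
  fix y assume "v \<in> reach V E \<sigma> y u"
  then show "dep v \<le> y" using reach_iff by auto
qed


lemma lu_V: "lu x \<Longrightarrow> x \<in> V" unfolding lu_def using uV lt_V by blast

lemma est_ge:
  assumes x: "x \<in> V" and dj: "disjoint_at x F"
    and F: "\<forall>p\<in>F. \<exists>v. qualifying V E \<sigma> r x v p \<and> shortest_qualifying V E \<sigma> (path_len p) x v p"
  shows "card F \<le> est V E \<sigma> r x"
proof -
  let ?S = "{card P |P. disjoint_at x P \<and> (\<forall>p\<in>P. \<exists>v. qualifying V E \<sigma> r x v p \<and> shortest_qualifying V E \<sigma> (path_len p) x v p)}"
  have bnd: "card P \<le> card V"
    if P: "disjoint_at x P" "\<forall>p\<in>P. \<exists>v. qualifying V E \<sigma> r x v p \<and> shortest_qualifying V E \<sigma> (path_len p) x v p" for P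
  proof (cases "finite P")
    case False then show ?thesis by simp
  next
    case True
    have q: "last p \<in> V \<and> last p \<noteq> x \<and> last p \<in> set p" if pP: "p \<in> P" for p
    proof -
      obtain v where "qualifying V E \<sigma> r x v p" using bspec[OF P(2) pP] by blast
      then show ?thesis unfolding qualifying_def is_path_def by auto
    qed
    have "inj_on last P"
    proof (rule inj_onI)
      fix p q assume pq: "p \<in> P" "q \<in> P" "last p = last q"
      show "p = q"
      proof (rule ccontr)
        assume "p \<noteq> q"
        then have "set p \<inter> set q = {x}" using P(1) pq unfolding disjoint_at_def by blast
        then show False using q[OF pq(1)] q[OF pq(2)] pq(3) by auto
      qed
    qed
    then have "card P = card (last ` P)" by (simp add: card_image)
    also have "\<dots> \<le> card V" using q finV by (intro card_mono) auto
    finally show ?thesis .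
  qed
  have "?S \<subseteq> {..card V}"
  proof
    fix n assume "n \<in> ?S"
    then obtain P where "n = card P" "disjoint_at x P"
      "\<forall>p\<in>P. \<exists>v. qualifying V E \<sigma> r x v p \<and> shortest_qualifying V E \<sigma> (path_len p) x v p"
      by blast
    then show "n \<in> {..card V}" using bnd by simp
  qed
  then have "finite ?S" using finite_subset[of _ "{..card V}"] by simp
  moreover have "card F \<in> ?S" using dj F by (intro CollectI exI[of _ F]) simp
  ultimately show ?thesis unfolding est_def by (rule Max_ge)
qed

definition Edx :: "'a \<Rightarrow> ('a \<times> 'a) set" where
  "Edx x = {(a,b). Dedge a b \<and> (a,x) \<in> \<sigma> \<and> b \<noteq> x \<and> dep b \<le> r}"
definition Ax :: "'a \<Rightarrow> 'a set" where "Ax x = {b. Dedge x b \<and> dep b \<le> r}"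
definition Bx :: "'a \<Rightarrow> 'a set" where "Bx x = {f. (x,f) \<in> \<sigma>}"

lemma fin_x: "finite (Edx x)" "finite (Ax x)" "finite (Bx x)"
proof -
  have "Edx x \<subseteq> V \<times> V" unfolding Edx_def Dedge_def using EV by auto
  then show "finite (Edx x)" using finV finite_subset by blast
  have "Ax x \<subseteq> V" unfolding Ax_def Dedge_def using EV by auto
  then show "finite (Ax x)" using finV finite_subset by blast
  have "Bx x \<subseteq> V" unfolding Bx_def using lt_V by auto
  then show "finite (Bx x)" using finV finite_subset by blast
qed

lemma fwd:
  assumes x: "x \<in> Rch" "lu x" and p: "abpath (Edx x) (Ax x) (Bx x) p"
  shows "qualifying V E \<sigma> r x (last p) (x#p) \<and> shortest_qualifying V E \<sigma> (path_len (x#p)) x (last p) (x#p)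
         \<and> (\<forall>z\<in>set p. dep x < dep z)"
proof -
  have pp: "p \<noteq> []" "distinct p" "successively (\<lambda>a b. (a,b) \<in> Edx x) p" "hd p \<in> Ax x" "last p \<in> Bx x"
    using p unfolding abpath_def dpath_def by auto
  have sDp: "successively Dedge p" using pp(3) by (rule successively_mono) (auto simp: Edx_def)
  have sD: "successively Dedge (x # p)" using pp(1,4) sDp by (auto simp: successively_Cons Ax_def)
  have xV: "x \<in> V" using lu_V x by blast
  have dst: "distinct (x # p)" using dwalk_distinct[OF sD] by simp
  have dz: "\<forall>z\<in>set p. dep x < dep z"
  proof
    fix z assume "z \<in> set p"
    moreover then have "z \<noteq> x" using dst by auto
    ultimately show "dep x < dep z" using dwalk_set_dep[OF sD] by simp
  qed
  have dr: "dep z \<le> r \<and> z \<in> V" if "z \<in> set p" for z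
  proof (cases "z = hd p")
    case True then show ?thesis using pp(4) unfolding Ax_def Dedge_def using EV by auto
  next
    case False
    then have "z \<in> set (tl p)" using that pp(1) by (cases p) auto
    then obtain a where "(a,z) \<in> Edx x" using succ_tl_head[OF pp(3)] by blast
    then show ?thesis unfolding Edx_def Dedge_def using EV by auto
  qed
  have dl: "dep (last p) = dep x + length p" using dwalk_last_dep[OF sD] pp(1) by simp
  have lp: "last p \<in> set p" using pp(1) by simp
  have lx: "last p \<noteq> x" using dz lp by auto
  have ip: "is_path V E (x # p)" unfolding is_path_iff
    using dst xV dr sD by (auto elim: successively_mono simp: Dedge_def)
  have plen: "path_len (x # p) = length p" unfolding path_len_def by simp
  have interior: "(w,x) \<in> \<sigma>" if "w \<in> set (x#p)" "w \<noteq> x" "w \<noteq> last p" for w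
  proof -
    have "w \<in> set (butlast p)" using that set_butlast_last[OF pp(1)] by auto
    then obtain b where "(w,b) \<in> Edx x" using succ_butlast_tail[OF pp(3)] by blast
    then show ?thesis unfolding Edx_def by auto
  qed
  have qual: "qualifying V E \<sigma> l x (last p) (x#p)" if "length p \<le> l" for l
    unfolding qualifying_def using ip lx plen that pp(5) interior pp(1) unfolding Bx_def by auto
  have noq: "\<not> qualifying V E \<sigma> (length p - 1) x (last p) q" for q
  proof
    assume q: "qualifying V E \<sigma> (length p - 1) x (last p) q"
    have qq: "q \<noteq> []" "distinct q" "set q \<subseteq> V" "successively E q" "hd q = x" "last q = last p"
        "path_len q \<le> length p - 1" "\<forall>w\<in>set q. w \<noteq> x \<and> w \<noteq> last p \<longrightarrow> (w, x) \<in> \<sigma>"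
      using q unfolding qualifying_def is_path_iff by auto
    obtain s where s: "upath s" "last s = x" "length s = Suc (dep x)" using dep_ex x(1) by blast
    have ss: "s \<noteq> []" "set s \<subseteq> V" "successively E s" "hd s = u" "\<forall>w\<in>set (butlast s). lu w"
      using s(1) unfolding upath_def is_path_iff by auto
    have qc: "q = x # tl q" using qq(1,5) by (cases q) auto
    have tq: "tl q \<noteq> []" using qc qq(6) lx by (metis last_ConsL)
    define w where "w = s @ tl q"
    have sw: "successively E w"
      using ss(3) qq(4) qc tq s(2) unfolding w_def
      by (metis successively_Cons successively_append_iff)
    have "set (tl q) \<subseteq> set q" by (cases q) auto
    then have wne: "w \<noteq> []" "hd w = u" "set w \<subseteq> V" using ss qq(3) unfolding w_def by auto
    have lw: "last w = last p" using tq qq(6) qc unfolding w_def by (metis last_ConsR last_appendR)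
    have cond: "\<forall>z\<in>set w. z \<noteq> last w \<longrightarrow> lu z"
    proof (intro ballI impI)
      fix z assume z: "z \<in> set w" "z \<noteq> last w"
      show "lu z"
      proof (cases "z \<in> set s")
        case True
        then show ?thesis using set_butlast_last[OF ss(1)] s(2) x(2) ss(5) by auto
      next
        case False
        then have "z \<in> set (tl q)" using z unfolding w_def by auto
        moreover have "x \<notin> set (tl q)" using qc qq(2) by (metis distinct.simps(2))
        ultimately have "(z,x) \<in> \<sigma>" using qq(8) z(2) lw qc by (metis list.set_intros(2))
        then show ?thesis using lu_trans x(2) unfolding lu_def by blast
      qed
    qed
    have "dep (last w) + 1 \<le> length w" using walk_up[OF sw wne(1) wne(3) wne(2) cond] by simp
    moreover have "length w = Suc (dep x) + (length q - 1)" unfolding w_def using s(3) by simp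
    moreover have "length q - 1 \<le> length p - 1" using qq(7) unfolding path_len_def by simp
    ultimately show False using lw dl pp(1) by (cases p) auto
  qed
  have "length p \<le> r" using dr[OF lp] dl by simp
  then show ?thesis using qual[of r] qual[of "length p"] noq dz
    unfolding shortest_qualifying_def plen by auto
qed


lemma back_path:
  assumes x: "x \<in> Rch" "(x,u) \<in> \<sigma>" "dep x \<le> r"
  shows "\<exists>q. qualifying V E \<sigma> r x (last q) q \<and> shortest_qualifying V E \<sigma> (path_len q) x (last q) q
          \<and> (\<forall>z\<in>set q. z \<noteq> x \<longrightarrow> dep z < dep x)"
proof -
  obtain s where s: "upath s" "last s = x" "length s = Suc (dep x)" using dep_ex x(1) by blast
  have ss: "s \<noteq> []" "distinct s" "set s \<subseteq> V" "successively E s" "hd s = u" "\<forall>w\<in>set (butlast s). lu w"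
    using s(1) unfolding upath_def is_path_iff by auto
  define bs where "bs = butlast s"
  have sbs: "s = bs @ [x]" unfolding bs_def using ss(1) s(2) by (metis append_butlast_last_id)
  have xu: "x \<noteq> u" using x(2) lt_irrefl by auto
  have bsne: "bs \<noteq> []" using sbs ss(5) xu by (cases bs) auto
  have ubs: "u \<in> set bs" using sbs ss(5) bsne by (cases bs) auto
  have xbs: "x \<notin> set bs" using ss(2) sbs by simp
  have depbs: "dep z < dep x" if zb: "z \<in> set bs" for z
  proof -
    obtain i where i: "i < length bs" "z = bs ! i" using zb by (auto simp: in_set_conv_nth)
    have "z = s ! i" using i sbs by (simp add: nth_append)
    then have "dep z = i" using sp_nth[OF s(1)] s(2,3) i sbs by simp
    then show ?thesis using i s(3) sbs by simp
  qed
  have "\<exists>z\<in>set (rev bs). (x,z) \<in> \<sigma>" using ubs x(2) by auto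
  then obtain r1 b r2 where sp: "rev bs = r1 @ b # r2" "(x,b) \<in> \<sigma>" "\<forall>z\<in>set r1. (x,z) \<notin> \<sigma>"
    using split_list_first_prop[of "rev bs" "\<lambda>z. (x,z) \<in> \<sigma>"] by blast
  have bs_eq: "bs = rev r2 @ b # rev r1" using sp(1) by (metis rev_append rev_rev_ident rev.simps(2) append_assoc append_Cons append_Nil)
  define sfx where "sfx = b # rev r1 @ [x]"
  have s_eq: "s = rev r2 @ sfx" unfolding sfx_def using sbs bs_eq by simp
  define q where "q = rev sfx"
  have q_eq: "q = x # r1 @ [b]" unfolding q_def sfx_def by simp
  have sucsfx: "successively E sfx" using ss(4) s_eq by (simp add: successively_append_iff)
  have sucq: "successively E q" unfolding q_def using sucsfx by (auto elim: successively_mono intro: Esym)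
  have dq: "distinct q" unfolding q_def using ss(2) s_eq by simp
  have qV: "set q \<subseteq> V" unfolding q_def using ss(3) s_eq by auto
  have bx: "b \<noteq> x" using xbs bs_eq by auto
  have ip: "is_path V E q" unfolding is_path_iff using sucq dq qV q_eq by simp
  have len: "length s = length r2 + length r1 + 2" using s_eq unfolding sfx_def by simp
  have plen: "path_len q = length r1 + 1" unfolding path_len_def q_eq by simp
  have plr: "path_len q \<le> r" using plen len s(3) x(3) by simp
  have interior: "(z,x) \<in> \<sigma>" if "z \<in> set q" "z \<noteq> x" "z \<noteq> b" for z
  proof -
    have "z \<in> set r1" using that q_eq by auto
    then have "(x,z) \<notin> \<sigma>" "z \<in> V" using sp(3) qV q_eq by auto
    then show ?thesis using lt_total[of z x] that lu_V[of x] x(2) lt_V by blast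
  qed
  have lq: "last q = b" "hd q = x" using q_eq by auto
  have qual: "qualifying V E \<sigma> l x b q" if "length r1 + 1 \<le> l" for l
    unfolding qualifying_def using ip lq bx plen that sp(2) interior by auto
  have deps: "\<forall>z\<in>set q. z \<noteq> x \<longrightarrow> dep z < dep x"
    using depbs bs_eq q_eq by auto
  have noq: "\<not> qualifying V E \<sigma> (length r1) x b q'" for q'
  proof
    assume q': "qualifying V E \<sigma> (length r1) x b q'"
    have qq: "q' \<noteq> []" "distinct q'" "set q' \<subseteq> V" "successively E q'" "hd q' = x" "last q' = b"
        "path_len q' \<le> length r1" "\<forall>w\<in>set q'. w \<noteq> x \<and> w \<noteq> b \<longrightarrow> (w, x) \<in> \<sigma>"
      using q' unfolding qualifying_def is_path_iff by auto
    define rq where "rq = rev q'"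
    have rq: "rq \<noteq> []" "hd rq = b" "last rq = x" "successively E rq" "set rq = set q'" "length rq = length q'"
      unfolding rq_def using qq by (auto simp: hd_rev last_rev elim: successively_mono intro: Esym)
    have rqc: "rq = b # tl rq" using rq(1,2) by (cases rq) auto
    have trq: "tl rq \<noteq> []" using rqc rq(3) bx by (metis last_ConsL)
    define w where "w = (rev r2 @ [b]) @ tl rq"
    have s1: "successively E (rev r2 @ [b])" using ss(4) s_eq unfolding sfx_def
      by (simp add: successively_append_iff successively_Cons)
    have sw: "successively E w" unfolding w_def using s1 rq(4) rqc trq
      by (metis successively_Cons successively_append_iff last_snoc)
    have hw: "hd w = u" unfolding w_def using ss(5) s_eq unfolding sfx_def by (cases r2 rule: rev_cases) auto
    have lw: "last w = x" unfolding w_def using trq rq(3) rqc by (metis last_ConsR last_appendR)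
    have "set (tl rq) \<subseteq> set rq" by (cases rq) auto
    then have wV: "set w \<subseteq> V" unfolding w_def using ss(3) s_eq rq(5) qq(3) unfolding sfx_def by auto
    have cond: "\<forall>z\<in>set w. z \<noteq> last w \<longrightarrow> lu z"
    proof (intro ballI impI)
      fix z assume z: "z \<in> set w" "z \<noteq> last w"
      show "lu z"
      proof (cases "z \<in> set (rev r2 @ [b])")
        case True
        then have "z \<in> set bs" using bs_eq by auto
        then show ?thesis using ss(6) unfolding bs_def by auto
      next
        case False
        then have "z \<in> set q'" using z \<open>set (tl rq) \<subseteq> set rq\<close> rq(5) unfolding w_def by auto
        moreover have "z \<noteq> b" using False by auto
        ultimately have "(z,x) \<in> \<sigma>" using qq(8) z(2) lw by auto
        then show ?thesis using lt_trans x(2) unfolding lu_def by blast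
      qed
    qed
    have "dep (last w) + 1 \<le> length w" using walk_up[OF sw _ wV hw cond] unfolding w_def by simp
    moreover have "length w = length r2 + 1 + (length q' - 1)" unfolding w_def using rq(6) by simp
    moreover have "length q' - 1 \<le> length r1" using qq(7) unfolding path_len_def by simp
    ultimately show False using lw s(3) len by simp
  qed
  show ?thesis
    using qual[of r] plr plen qual[of "length r1 + 1"] noq deps lq
    unfolding shortest_qualifying_def by (intro exI[of _ q]) auto
qed

lemma Tnl: "\<not> lu c \<Longrightarrow> T c \<subseteq> {c}"
proof
  fix v assume c: "\<not> lu c" and v: "v \<in> T c"
  then obtain w where w: "w \<noteq> []" "successively Dedge w" "hd w = c" "last w = v" unfolding T_def by blast
  have "w = [c]"
  proof (cases w)
    case (Cons a w')
    show ?thesis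
    proof (cases w')
      case (Cons b w'')
      then have "Dedge c b" using w \<open>w = a # w'\<close> by auto
      then show ?thesis using c unfolding Dedge_def by auto
    qed (use Cons w in auto)
  qed (use w in auto)
  then show "v \<in> {c}" using w by auto
qed

lemma T_fin: "finite (T y)"
proof -
  have "T y \<subseteq> V" unfolding T_def using reach_iff lt_V by blast
  then show ?thesis using finV finite_subset by blast
qed

lemma W_nl: "\<not> lu c \<Longrightarrow> W c \<le> (k - 1) ^ (r - dep c)"
proof -
  assume c: "\<not> lu c"
  have "W c \<le> (\<Sum>v\<in>{c}. (k - 1) ^ (r - dep v))" unfolding W_def using Tnl[OF c] by (intro sum_mono2) auto
  then show ?thesis by simp
qed

lemma sum_UN_le_nat:
  fixes f :: "'b \<Rightarrow> nat"
  assumes "finite I" "\<And>i. i \<in> I \<Longrightarrow> finite (A i)"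
  shows "sum f (\<Union>i\<in>I. A i) \<le> (\<Sum>i\<in>I. sum f (A i))"
  using assms
proof (induction I rule: finite_induct)
  case (insert j I)
  have "sum f (\<Union>i\<in>insert j I. A i) = sum f (A j \<union> (\<Union>i\<in>I. A i))" by simp
  also have "\<dots> \<le> sum f (A j) + sum f (\<Union>i\<in>I. A i)"
    using sum.union_inter[of "A j" "\<Union>i\<in>I. A i" f] insert by simp
  also have "\<dots> \<le> sum f (A j) + (\<Sum>i\<in>I. sum f (A i))" using insert by simp
  finally show ?case using insert by simp
qed simp


lemma cover:
  assumes x: "x \<in> Rch" "lu x" and C: "separates (Edx x) (Ax x) (Bx x) C" and v: "v \<in> T x"
  shows "\<exists>c\<in>C. c \<in> Rch \<and> dep x < dep c \<and> dep c \<le> r \<and> v \<in> T c"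
proof -
  obtain w where w: "w \<noteq> []" "successively Dedge w" "hd w = x" "last w = v" and vr: "v \<in> reach V E \<sigma> r u"
    using v unfolding T_def by blast
  have vv: "v \<in> Rch" "(u,v) \<in> \<sigma>" "dep v \<le> r" using vr reach_iff by auto
  have xv: "(x,v) \<in> \<sigma>" using vv(2) x(2) lt_trans unfolding lu_def by blast
  have dw: "distinct w" using dwalk_distinct[OF w(2,1)] .
  have wdep: "dep z \<le> r" if "z \<in> set w" for z using dwalk_set_dep[OF w(2,1) that] w(4) vv(3) by simp
  have "\<exists>z\<in>set w. (x,z) \<in> \<sigma>" using xv w(1,4) by (intro bexI[of _ v]) auto
  then obtain w1 f w2 where sp: "w = w1 @ f # w2" "(x,f) \<in> \<sigma>" "\<forall>z\<in>set w1. (x,z) \<notin> \<sigma>"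
    using split_list_first_prop[of w "\<lambda>z. (x,z) \<in> \<sigma>"] by blast
  have "w1 \<noteq> []" using sp w(3) lt_irrefl by (cases w1) auto
  then obtain w1' where w1: "w1 = x # w1'" using w(3) sp(1) by (cases w1) auto
  define p where "p = w1' @ [f]"
  have wp: "w = x # p @ w2" unfolding p_def using sp(1) w1 by simp
  have sDp: "successively Dedge p" using w(2) unfolding wp
    by (auto simp: successively_append_iff successively_Cons p_def)
  have dp: "distinct p" "x \<notin> set p" using dw unfolding wp by auto
  have succ: "successively (\<lambda>a b. (a,b) \<in> Edx x) p"
  proof (rule successively_restrict[OF sDp])
    fix a b assume ab: "Dedge a b" "a \<in> set (butlast p)" "b \<in> set (tl p)"
    have "a \<in> set w1'" using ab(2) unfolding p_def by simp
    then have "(x,a) \<notin> \<sigma>" "a \<noteq> x" "a \<in> V" using sp(3) w1 dp ab(1) EV unfolding p_def Dedge_def by auto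
    then have "(a,x) \<in> \<sigma>" using lt_total[of a x] lu_V[OF x(2)] by blast
    moreover have "b \<noteq> x" using ab(3) dp(2) by (cases p) auto
    moreover have "dep b \<le> r" using ab(3) wdep unfolding wp by (cases p) auto
    ultimately show "(a,b) \<in> Edx x" unfolding Edx_def using ab(1) by auto
  qed
  have pne: "p \<noteq> []" unfolding p_def by simp
  have "Dedge x (hd p)" using w(2) pne unfolding wp by (cases p) auto
  moreover have "dep (hd p) \<le> r" using wdep pne unfolding wp by (cases p) auto
  ultimately have "hd p \<in> Ax x" unfolding Ax_def by auto
  moreover have "last p \<in> Bx x" unfolding p_def Bx_def using sp(2) by simp
  ultimately have "abpath (Edx x) (Ax x) (Bx x) p" unfolding abpath_def dpath_def using pne dp succ by auto
  then obtain c where c: "c \<in> C" "c \<in> set p" using C unfolding separates_def by blast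
  have cw: "c \<in> set w" "c \<noteq> x" using c(2) dp unfolding wp by auto
  obtain w3 w4 where w34: "w = w3 @ c # w4" using cw(1) split_list by metis
  have "successively Dedge (c # w4)" using w(2) w34 by (simp add: successively_append_iff)
  moreover have "last (c # w4) = v" using w(4) w34 by simp
  ultimately have "v \<in> T c" unfolding T_def using vr by (intro CollectI conjI exI[of _ "c # w4"]) auto
  moreover have "c \<in> Rch" using dwalk_Rch[OF w(2,1)] w(3) x(1) cw(1) by simp
  moreover have "dep x < dep c" using dwalk_set_dep[OF w(2,1) cw(1)] cw(2) w(3) by simp
  moreover have "dep c \<le> r" using wdep cw(1) by simp
  ultimately show ?thesis using c(1) by blast
qed

lemma W_cover:
  assumes "T x \<subseteq> (\<Union>c\<in>C'. T c)" "finite C'"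
  shows "W x \<le> (\<Sum>c\<in>C'. W c)"
proof -
  have "W x \<le> (\<Sum>v\<in>(\<Union>c\<in>C'. T c). (k - 1) ^ (r - dep v))"
    unfolding W_def using assms T_fin by (intro sum_mono2) auto
  also have "\<dots> \<le> (\<Sum>c\<in>C'. W c)" unfolding W_def using sum_UN_le_nat[OF assms(2)] T_fin by blast
  finally show ?thesis .
qed


lemma T_deeper:
  assumes "v \<in> T x" "v \<noteq> x"
  shows "dep x < dep v \<and> dep v \<le> r"
proof -
  obtain w where w: "w \<noteq> []" "successively Dedge w" "hd w = x" "last w = v" and vr: "v \<in> reach V E \<sigma> r u"
    using assms(1) unfolding T_def by blast
  have "v \<in> set w" using w(1,4) by (metis last_in_set)
  then show ?thesis using dwalk_set_dep[OF w(2,1)] w assms(2) vr reach_iff by auto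
qed

lemma claim:
  assumes "x \<in> Rch" "(x,u) \<in> \<sigma>"
  shows "W x \<le> (k - 1) ^ (r - dep x)"
  using assms
proof (induction "r - dep x" arbitrary: x rule: less_induct)
  case less
  have lux: "lu x" using less.prems unfolding lu_def by auto
  have xV: "x \<in> V" using lu_V[OF lux] .
  show ?case
  proof (cases "dep x < r")
    case False
    have "T x = {}"
    proof (rule ccontr)
      assume "T x \<noteq> {}"
      then obtain v where v: "v \<in> T x" by blast
      then have "(u,v) \<in> \<sigma>" unfolding T_def using reach_iff by auto
      then have "v \<noteq> x" using less.prems(2) lt_asym by auto
      then show False using T_deeper[OF v] False by auto
    qed
    then show ?thesis unfolding W_def by simp
  next
    case True
    have "\<exists>C. finite C \<and> separates (Edx x) (Ax x) (Bx x) C \<and> card C < est V E \<sigma> r x"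
    proof (rule ccontr)
      assume nC: "\<not> (\<exists>C. finite C \<and> separates (Edx x) (Ax x) (Bx x) C \<and> card C < est V E \<sigma> r x)"
      have H: "est V E \<sigma> r x \<le> card S" if S: "finite S" "separates (Edx x) (Ax x) (Bx x) S" for S
      proof (rule ccontr)
        assume "\<not> est V E \<sigma> r x \<le> card S"
        then have "card S < est V E \<sigma> r x" by simp
        then show False using nC S by blast
      qed
      obtain P where P: "finite P" "card P = est V E \<sigma> r x" "disj_family P"
          "\<forall>p\<in>P. abpath (Edx x) (Ax x) (Bx x) p"
        using menger[OF fin_x H] by blast
      obtain q where q: "qualifying V E \<sigma> r x (last q) q"
          "shortest_qualifying V E \<sigma> (path_len q) x (last q) q" "\<forall>z\<in>set q. z \<noteq> x \<longrightarrow> dep z < dep x"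
        using back_path[OF less.prems] True by auto
      have fw: "qualifying V E \<sigma> r x (last p) (x#p) \<and> shortest_qualifying V E \<sigma> (path_len (x#p)) x (last p) (x#p)
         \<and> (\<forall>z\<in>set p. dep x < dep z)" if "p \<in> P" for p
        using fwd[OF less.prems(1) lux] P(4) that by blast
      have pne: "p \<noteq> []" if "p \<in> P" for p using P(4) that unfolding abpath_def dpath_def by auto
      have qdis: "set q \<inter> set (x # p) = {x}" if "p \<in> P" for p
      proof -
        have "x \<in> set q" using q(1) unfolding qualifying_def is_path_def by (auto intro: hd_in_set)
        moreover have "z = x" if zz: "z \<in> set q" "z \<in> set (x # p)" for z
        proof (rule ccontr)
          assume zx: "z \<noteq> x"
          then have "z \<in> set p" using zz(2) by simp
          then have "dep x < dep z" using fw[OF \<open>p \<in> P\<close>] by blast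
          moreover have "dep z < dep x" using q(3) zz(1) zx by blast
          ultimately show False by simp
        qed
        ultimately show ?thesis by auto
      qed
      have qn: "q \<notin> Cons x ` P"
      proof
        assume "q \<in> Cons x ` P"
        then obtain p where "p \<in> P" "q = x # p" by blast
        note pq = this
        have pn: "p \<noteq> []" using pne pq(1) by blast
        then have "dep x < dep (hd p)" using fw[OF pq(1)] by simp
        then have "hd p \<noteq> x" by auto
        moreover have "hd p \<in> set q \<inter> set (x # p)" using pq(2) pn by simp
        ultimately show False using qdis[OF pq(1)] by blast
      qed
      define F where "F = insert q (Cons x ` P)"
      have cF: "card F = Suc (est V E \<sigma> r x)"
        unfolding F_def using qn P(1,2) by (simp add: card_image)
      have dF: "disjoint_at x F"
        unfolding disjoint_at_def F_def
      proof (intro ballI impI)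
        fix p1 p2 assume p12: "p1 \<in> insert q (Cons x ` P)" "p2 \<in> insert q (Cons x ` P)" "p1 \<noteq> p2"
        show "set p1 \<inter> set p2 = {x}"
        proof (cases "p1 = q")
          case True
          then obtain p where "p \<in> P" "p2 = x # p" using p12 by auto
          then show ?thesis using qdis True by auto
        next
          case False
          then obtain pa where pa: "pa \<in> P" "p1 = x # pa" using p12 by auto
          show ?thesis
          proof (cases "p2 = q")
            case True then show ?thesis using qdis pa by auto
          next
            case False
            then obtain pb where pb: "pb \<in> P" "p2 = x # pb" using p12 by auto
            then have "pa \<noteq> pb" using pa p12(3) by auto
            then have "set pa \<inter> set pb = {}" using P(3) pa pb unfolding disj_family_def by blast
            then show ?thesis using pa pb by auto
          qed
        qed
      qed
      have qF: "\<forall>p\<in>F. \<exists>v. qualifying V E \<sigma> r x v p \<and> shortest_qualifying V E \<sigma> (path_len p) x v p"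
        unfolding F_def using q fw by blast
      have "card F \<le> est V E \<sigma> r x" using est_ge[OF xV dF qF] .
      then show False using cF by simp
    qed
    then obtain C where C: "finite C" "separates (Edx x) (Ax x) (Bx x) C" "card C < est V E \<sigma> r x" by blast
    define C' where "C' = {c\<in>C. c \<in> Rch \<and> dep x < dep c \<and> dep c \<le> r}"
    have finC': "finite C'" using C(1) unfolding C'_def by simp
    have cov: "T x \<subseteq> (\<Union>c\<in>C'. T c)" using cover[OF less.prems(1) lux C(2)] unfolding C'_def by blast
    have Wx: "W x \<le> (\<Sum>c\<in>C'. W c)" using W_cover[OF cov finC'] .
    have Wc: "W c \<le> (k - 1) ^ (r - dep c)" if c: "c \<in> C'" for c
    proof (cases "(c,u) \<in> \<sigma>")
      case True
      have "r - dep c < r - dep x" using c unfolding C'_def by auto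
      then show ?thesis using less.hyps[of c] True c unfolding C'_def by auto
    next
      case False
      have "c \<noteq> u" using c dep_u unfolding C'_def by auto
      then have "\<not> lu c" using False unfolding lu_def by auto
      then show ?thesis using W_nl by blast
    qed
    have kC: "card C' < k"
    proof -
      have "card C' \<le> card C" unfolding C'_def using C(1) by (intro card_mono) auto
      then show ?thesis using C(3) estk xV by fastforce
    qed
    show ?thesis
    proof (cases "C' = {}")
      case True then show ?thesis using Wx by simp
    next
      case False
      then have "0 < card C'" using finC' by (simp add: card_gt_0_iff)
      then have k2: "2 \<le> k" using kC by simp
      have "(k - 1) ^ (r - dep c) \<le> (k - 1) ^ (r - dep x - 1)" if "c \<in> C'" for c
        using that k2 unfolding C'_def by (intro power_increasing) auto
      then have "W c \<le> (k - 1) ^ (r - dep x - 1)" if "c \<in> C'" for c using Wc that le_trans by blast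
      then have "(\<Sum>c\<in>C'. W c) \<le> card C' * (k - 1) ^ (r - dep x - 1)"
        using sum_bounded_above[of C' W "(k - 1) ^ (r - dep x - 1)"] by simp
      also have "\<dots> \<le> (k - 1) * (k - 1) ^ (r - dep x - 1)" using kC by (intro mult_right_mono) auto
      also have "\<dots> = (k - 1) ^ (Suc (r - dep x - 1))" by simp
      also have "\<dots> = (k - 1) ^ (r - dep x)"
      proof -
        have e: "Suc (r - dep x - 1) = r - dep x" using True by simp
        show ?thesis by (simp only: e)
      qed
      finally show ?thesis using Wx by simp
    qed
  qed
qed

lemma root: "W u \<le> k * (k - 1) ^ (r - 1)"
proof -
  have luu: "lu u" unfolding lu_def by simp
  have "\<exists>C. finite C \<and> separates (Edx u) (Ax u) (Bx u) C \<and> card C \<le> est V E \<sigma> r u"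
  proof (rule ccontr)
    assume "\<not> ?thesis"
    note nC = this
    have H: "Suc (est V E \<sigma> r u) \<le> card S" if S: "finite S" "separates (Edx u) (Ax u) (Bx u) S" for S
    proof (rule ccontr)
      assume "\<not> Suc (est V E \<sigma> r u) \<le> card S"
      then have "card S \<le> est V E \<sigma> r u" by simp
      then show False using nC S by blast
    qed
    obtain P where P: "finite P" "card P = Suc (est V E \<sigma> r u)" "disj_family P"
        "\<forall>p\<in>P. abpath (Edx u) (Ax u) (Bx u) p"
      using menger[OF fin_x H] by blast
    have fw: "qualifying V E \<sigma> r u (last p) (u#p) \<and> shortest_qualifying V E \<sigma> (path_len (u#p)) u (last p) (u#p)"
      if "p \<in> P" for p
      using fwd[OF u_Rch luu] P(4) that by blast
    define F where "F = Cons u ` P"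
    have cF: "card F = Suc (est V E \<sigma> r u)" unfolding F_def using P(1,2) by (simp add: card_image)
    have dF: "disjoint_at u F"
      unfolding disjoint_at_def F_def
    proof (intro ballI impI)
      fix p1 p2 assume p12: "p1 \<in> Cons u ` P" "p2 \<in> Cons u ` P" "p1 \<noteq> p2"
      then obtain pa pb where "pa \<in> P" "pb \<in> P" "p1 = u # pa" "p2 = u # pb" by blast
      moreover then have "set pa \<inter> set pb = {}" using P(3) p12(3) unfolding disj_family_def by blast
      ultimately show "set p1 \<inter> set p2 = {u}" by auto
    qed
    have qF: "\<forall>p\<in>F. \<exists>v. qualifying V E \<sigma> r u v p \<and> shortest_qualifying V E \<sigma> (path_len p) u v p"
      unfolding F_def using fw by blast
    have "card F \<le> est V E \<sigma> r u" using est_ge[OF uV dF qF] .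
    then show False using cF by simp
  qed
  then obtain C where C: "finite C" "separates (Edx u) (Ax u) (Bx u) C" "card C \<le> est V E \<sigma> r u" by blast
  define C' where "C' = {c\<in>C. c \<in> Rch \<and> dep u < dep c \<and> dep c \<le> r}"
  have finC': "finite C'" using C(1) unfolding C'_def by simp
  have cov: "T u \<subseteq> (\<Union>c\<in>C'. T c)" using cover[OF u_Rch luu C(2)] unfolding C'_def by blast
  have Wu: "W u \<le> (\<Sum>c\<in>C'. W c)" using W_cover[OF cov finC'] .
  have Wc: "W c \<le> (k - 1) ^ (r - 1)" if c: "c \<in> C'" for c
  proof -
    have cR: "c \<in> Rch" "1 \<le> dep c" using c dep_u unfolding C'_def by auto
    obtain s where s: "upath s" "last s = c" "length s = Suc (dep c)" using dep_ex cR(1) by blast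
    have sD: "successively Dedge s" using sp_dwalk s by simp
    have hs: "hd s = u" using s(1) unfolding upath_def by simp
    obtain s' where s': "s = u # s'" using hs s(3) by (cases s) auto
    have s'ne: "s' \<noteq> []" using s' s(3) cR(2) by auto
    have y: "hd s' \<in> Rch" "dep (hd s') = 1" using sp_nth[OF s(1), of 1] s(2,3) cR(2) s' s'ne
      by (auto simp: hd_conv_nth)
    have sD': "successively Dedge s'" using sD s' by (auto simp: successively_Cons)
    have ls': "last s' = c" using s(2) s' s'ne by simp
    show ?thesis
    proof (cases "(hd s', u) \<in> \<sigma>")
      case True
      have "T c \<subseteq> T (hd s')"
      proof
        fix v assume "v \<in> T c"
        then obtain w where w: "w \<noteq> []" "successively Dedge w" "hd w = c" "last w = v"
          and vr: "v \<in> reach V E \<sigma> r u" unfolding T_def by blast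
        have wc: "w = c # tl w" using w by (cases w) auto
        define w' where "w' = s' @ tl w"
        have "successively Dedge (c # tl w)" using w(2) wc by simp
        then have "successively Dedge w'" unfolding w'_def using sD' ls'
          by (auto simp: successively_append_iff successively_Cons)
        moreover have "hd w' = hd s'" unfolding w'_def using s'ne by simp
        moreover have "last w' = v"
        proof (cases "tl w = []")
          case True
          then have "v = c" using w(4) wc by (metis last_ConsL)
          then show ?thesis unfolding w'_def using True ls' by simp
        next
          case False
          then show ?thesis unfolding w'_def using w(4) wc by (metis last_ConsR last_appendR)
        qed
        moreover have "w' \<noteq> []" unfolding w'_def using s'ne by simp
        ultimately show "v \<in> T (hd s')" unfolding T_def using vr by blast
      qed
      then have "W c \<le> W (hd s')" unfolding W_def using T_fin by (intro sum_mono2) auto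
      also have "\<dots> \<le> (k - 1) ^ (r - 1)" using claim[OF y(1) True] y(2) by simp
      finally show ?thesis .
    next
      case False
      have "hd s' \<noteq> u" using y(2) dep_u by auto
      then have nl: "\<not> lu (hd s')" using False unfolding lu_def by auto
      have "s' = [hd s']"
      proof (cases s')
        case (Cons a t)
        show ?thesis
        proof (cases t)
          case (Cons b t')
          then have "Dedge a b" using sD' \<open>s' = a # t\<close> by auto
          then show ?thesis using nl \<open>s' = a # t\<close> unfolding Dedge_def by auto
        qed (use Cons in auto)
      qed (use s'ne in auto)
      then have "c = hd s'" using ls' by (metis last_ConsL)
      then show ?thesis using W_nl[OF nl] y(2) by simp
    qed
  qed
  have "(\<Sum>c\<in>C'. W c) \<le> card C' * (k - 1) ^ (r - 1)"
    using sum_bounded_above[of C' W "(k - 1) ^ (r - 1)"] Wc by simp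
  also have "\<dots> \<le> k * (k - 1) ^ (r - 1)"
  proof -
    have "card C' \<le> card C" unfolding C'_def using C(1) by (intro card_mono) auto
    then have "card C' \<le> k" using C(3) estk uV by fastforce
    then show ?thesis by (intro mult_right_mono) auto
  qed
  finally show ?thesis using Wu by simp
qed

lemma final: "(\<Sum>v \<in> reach V E \<sigma> r u. (k - 1) ^ (r - dist_reach V E \<sigma> u v)) \<le> k * (k - 1) ^ (r - 1)"
proof -
  have "T u = reach V E \<sigma> r u"
  proof
    show "T u \<subseteq> reach V E \<sigma> r u" unfolding T_def by auto
    show "reach V E \<sigma> r u \<subseteq> T u"
    proof
      fix v assume v: "v \<in> reach V E \<sigma> r u"
      then have vR: "v \<in> Rch" using reach_iff by auto
      obtain s where s: "upath s" "last s = v" "length s = Suc (dep v)" using dep_ex vR by blast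
      have "successively Dedge s" using sp_dwalk s by simp
      moreover have "hd s = u" "s \<noteq> []" using s(1) unfolding upath_def is_path_def by auto
      ultimately show "v \<in> T u" unfolding T_def using v s(2) by auto
    qed
  qed
  moreover have "dist_reach V E \<sigma> u v = dep v" if "v \<in> reach V E \<sigma> r u" for v
    using dist_reach_dep that reach_iff by auto
  ultimately have "(\<Sum>v \<in> reach V E \<sigma> r u. (k - 1) ^ (r - dist_reach V E \<sigma> u v)) = W u"
    unfolding W_def by (intro sum.cong) auto
  then show ?thesis using root by simp
qed

end

theorem lemma4p5:
  fixes V :: "'a set" and E :: "'a \<Rightarrow> 'a \<Rightarrow> bool" and \<sigma> :: "('a \<times> 'a) set"
    and r k :: nat and u :: 'a
  assumes "simple_graph V E"
    and "r \<ge> 1"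
    and "k = adm V E r"
    and "total_order_on V \<sigma>"
    and "\<forall>w \<in> V. est V E \<sigma> r w \<le> k"
    and "u \<in> V"
  shows "(\<Sum>v \<in> reach V E \<sigma> r u. (k - 1) ^ (r - dist_reach V E \<sigma> u v))
           \<le> k * (k - 1) ^ (r - 1)"
proof -
  interpret adm_ctx V E \<sigma> r k u
    using assms by (unfold_locales) auto
  show ?thesis by (rule final)
qed

end
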